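(* A countably infinite metric space is isometric to a dense subset of the Urysohn space $\mathbb U$ if and only if it satisfies the almost extension property.
   Context: $\mathbb U$ denotes Urysohn's universal separable metric space: the unique (up to isometry) complete separable metric space such that for every finite metric space $F=\{x_0,\dots,x_n\}$, every isometry $\{x_0,\dots,x_{n-1}\}\to\mathbb U$ extends to an isometry $F\to\mathbb U$. For $\lambda>1$, an injection $f$ is $\lambda$-bi-Lipschitz if for all distinct $a,b$ in its domain $d(f(a),f(b))<\lambda d(a,b)$ and $d(a,b)<\lambda d(f(a),f(b))$. A metric space $X$ has the almost extension property if for every finite metric space $F=\{x_0,\dots,x_{n-1},x_n\}$ and every $\lambda>1$, every $\lambda$-bi-Lipschitz map $f:\{x_0,\dots,x_{n-1}\}\to X$ extends to a $\lambda$-bi-Lipschitz map $\hat f:F\to X$. *)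

theory Defs
  imports "HOL-Analysis.Analysis"
begin

text \<open>Finite metric spaces are represented on the point set {0..n} of naturals
  (every finite metric space is isometric to one of these); the last point n plays
  the role of x_n and {0..<n} the role of {x_0,...,x_(n-1)}.\<close>

definition isometric_into ::
  "'b set \<Rightarrow> ('b \<Rightarrow> 'b \<Rightarrow> real) \<Rightarrow> ('b \<Rightarrow> 'a) \<Rightarrow> 'a set \<Rightarrow> ('a \<Rightarrow> 'a \<Rightarrow> real) \<Rightarrow> bool" where
  "isometric_into A e f X d \<longleftrightarrow>
     (\<forall>a\<in>A. f a \<in> X) \<and> (\<forall>a\<in>A. \<forall>b\<in>A. d (f a) (f b) = e a b)"

definition bi_lipschitz ::
  "real \<Rightarrow> 'b set \<Rightarrow> ('b \<Rightarrow> 'b \<Rightarrow> real) \<Rightarrow> ('b \<Rightarrow> 'a) \<Rightarrow> 'a set \<Rightarrow> ('a \<Rightarrow> 'a \<Rightarrow> real) \<Rightarrow> bool" where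
  "bi_lipschitz lam A e f X d \<longleftrightarrow>
     (\<forall>a\<in>A. f a \<in> X) \<and> inj_on f A \<and>
     (\<forall>a\<in>A. \<forall>b\<in>A. a \<noteq> b \<longrightarrow> d (f a) (f b) < lam * e a b \<and> e a b < lam * d (f a) (f b))"

definition extension_property :: "'a set \<Rightarrow> ('a \<Rightarrow> 'a \<Rightarrow> real) \<Rightarrow> bool" where
  "extension_property U d \<longleftrightarrow>
     (\<forall>(n::nat) (e::nat \<Rightarrow> nat \<Rightarrow> real) f.
        Metric_space {0..n} e \<and> isometric_into {0..<n} e f U d \<longrightarrow>
        (\<exists>g. isometric_into {0..n} e g U d \<and> (\<forall>i<n. g i = f i)))"

definition urysohn_space :: "'a set \<Rightarrow> ('a \<Rightarrow> 'a \<Rightarrow> real) \<Rightarrow> bool" where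
  "urysohn_space U d \<longleftrightarrow>
     Metric_space U d \<and> Metric_space.mcomplete U d \<and>
     separable_space (Metric_space.mtopology U d) \<and> extension_property U d"

definition almost_extension_property :: "'a set \<Rightarrow> ('a \<Rightarrow> 'a \<Rightarrow> real) \<Rightarrow> bool" where
  "almost_extension_property X d \<longleftrightarrow>
     (\<forall>(n::nat) (e::nat \<Rightarrow> nat \<Rightarrow> real) (lam::real) f.
        Metric_space {0..n} e \<and> lam > 1 \<and> bi_lipschitz lam {0..<n} e f X d \<longrightarrow>
        (\<exists>g. bi_lipschitz lam {0..n} e g X d \<and> (\<forall>i<n. g i = f i)))"

end

theory Submission
  imports Defs
begin


definition extd :: "('b \<Rightarrow> 'b \<Rightarrow> real) \<Rightarrow> ('b \<Rightarrow> real) \<Rightarrow> 'b option \<Rightarrow> 'b option \<Rightarrow> real" where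
  "extd dM r a b = (case a of None \<Rightarrow> (case b of None \<Rightarrow> 0 | Some y \<Rightarrow> \<bar>r y\<bar>)
     | Some x \<Rightarrow> (case b of None \<Rightarrow> \<bar>r x\<bar> | Some y \<Rightarrow> dM x y))"

lemma Metric_space_extd:
  assumes M: "Metric_space M dM"
    and pos: "\<And>x. x \<in> M \<Longrightarrow> r x > 0"
    and lip: "\<And>x y. x \<in> M \<Longrightarrow> y \<in> M \<Longrightarrow> r x \<le> r y + dM x y"
    and sm: "\<And>x y. x \<in> M \<Longrightarrow> y \<in> M \<Longrightarrow> dM x y \<le> r x + r y"
  shows "Metric_space (insert None (Some ` M)) (extd dM r)"
proof
  interpret M: Metric_space M dM by (rule M)
  fix x y z
  show "0 \<le> extd dM r x y" by (auto simp: extd_def split: option.splits)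
  show "extd dM r x y = extd dM r y x" by (auto simp: extd_def M.commute split: option.splits)
  assume xyz: "x \<in> insert None (Some ` M)" "y \<in> insert None (Some ` M)" 
  then show "extd dM r x y = 0 \<longleftrightarrow> x = y"
    using pos by (fastforce simp: extd_def split: option.splits)
  assume z: "z \<in> insert None (Some ` M)"
  show "extd dM r x z \<le> extd dM r x y + extd dM r y z"
    using xyz z pos lip sm M.triangle M.commute
    apply (auto simp: extd_def split: option.splits)
    apply (smt (verit) pos)+
    done
qed



lemma enum_ext:
  assumes "finite B" "p \<notin> B"
  obtains n :: nat and g where "inj_on g {0..n}" "g n = p" "g ` {0..<n} = B"
proof -
  obtain g0 where g0: "bij_betw g0 {0..<card B} B" using ex_bij_betw_nat_finite[OF assms(1)] by blast
  define g where "g i = (if i < card B then g0 i else p)" for i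
  have "inj_on g {0..card B}"
  proof (rule inj_onI)
    fix i j assume ij: "i \<in> {0..card B}" "j \<in> {0..card B}" "g i = g j"
    have "g0 k \<in> B" if "k < card B" for k using g0 that by (auto simp: bij_betw_def)
    moreover have "inj_on g0 {0..<card B}" using g0 by (simp add: bij_betw_def)
    ultimately show "i = j" using ij assms(2) unfolding g_def inj_on_def
      by (cases "i < card B"; cases "j < card B") auto
  qed
  moreover have "g (card B) = p" by (simp add: g_def)
  moreover have "g ` {0..<card B} = B" using g0 by (auto simp: g_def bij_betw_def)
  ultimately show ?thesis by (rule that[of g "card B"])
qed

lemma Metric_space_pull:
  assumes "Metric_space S e" "inj_on g I" "g ` I \<subseteq> S"
  shows "Metric_space I (\<lambda>i j. e (g i) (g j))"
proof -
  interpret Metric_space S e by fact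
  show ?thesis
  proof
    fix x y z
    show "0 \<le> e (g x) (g y)" by simp
    show "e (g x) (g y) = e (g y) (g x)" by (rule commute)
    assume xy: "x \<in> I" "y \<in> I"
    then have "g x \<in> S" "g y \<in> S" using assms(3) by auto
    then show "e (g x) (g y) = 0 \<longleftrightarrow> x = y" using xy assms(2) by (auto simp: inj_on_def)
    assume "z \<in> I"
    then have "g z \<in> S" using assms(3) by auto
    then show "e (g x) (g z) \<le> e (g x) (g y) + e (g y) (g z)" using triangle \<open>g x \<in> S\<close> \<open>g y \<in> S\<close> by blast
  qed
qed

lemma ext_U:
  assumes U: "urysohn_space U dU" and fin: "finite B" and pB: "p \<notin> B"
    and ms: "Metric_space (insert p B) e"
    and iso: "isometric_into B e f U dU"
  shows "\<exists>q\<in>U. \<forall>b\<in>B. dU q (f b) = e p b"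
proof -
  obtain n :: nat and g where g: "inj_on g {0..n}" "g n = p" "g ` {0..<n} = B" using enum_ext[OF fin pB] by blast
  have gs: "g ` {0..n} \<subseteq> insert p B"
  proof
    fix x assume "x \<in> g ` {0..n}"
    then obtain i where "i \<le> n" "x = g i" by auto
    then show "x \<in> insert p B" using g(2,3) by (cases "i < n") auto
  qed
  have M: "Metric_space {0..n} (\<lambda>i j. e (g i) (g j))" by (rule Metric_space_pull[OF ms g(1) gs])
  have I: "isometric_into {0..<n} (\<lambda>i j. e (g i) (g j)) (f \<circ> g) U dU"
    using iso g(3) unfolding isometric_into_def by auto
  have "extension_property U dU" using U by (simp add: urysohn_space_def)
  then obtain G where G: "isometric_into {0..n} (\<lambda>i j. e (g i) (g j)) G U dU" "\<forall>i<n. G i = (f \<circ> g) i"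
    using M I unfolding extension_property_def by blast
  show ?thesis
  proof (intro bexI ballI)
    show "G n \<in> U" using G(1) by (simp add: isometric_into_def)
    fix b assume "b \<in> B"
    then obtain i where i: "i < n" "b = g i" using g(3) by auto
    have "dU (G n) (G i) = e (g n) (g i)" using G(1) i by (simp add: isometric_into_def)
    then show "dU (G n) (f b) = e p b" using G(2) i g(2) by simp
  qed
qed

lemma aep_gen:
  assumes A: "almost_extension_property X d" and fin: "finite B" and pB: "p \<notin> B"
    and ms: "Metric_space (insert p B) e" and lam: "lam > 1"
    and bl: "bi_lipschitz lam B e f X d"
  shows "\<exists>y\<in>X. \<forall>b\<in>B. y \<noteq> f b \<and> d y (f b) < lam * e p b \<and> e p b < lam * d y (f b)"
proof -
  obtain n :: nat and g where g: "inj_on g {0..n}" "g n = p" "g ` {0..<n} = B" using enum_ext[OF fin pB] by blast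
  have gs: "g ` {0..n} \<subseteq> insert p B"
  proof
    fix x assume "x \<in> g ` {0..n}"
    then obtain i where "i \<le> n" "x = g i" by auto
    then show "x \<in> insert p B" using g(2,3) by (cases "i < n") auto
  qed
  have M: "Metric_space {0..n} (\<lambda>i j. e (g i) (g j))" by (rule Metric_space_pull[OF ms g(1) gs])
  have inj: "inj_on g {0..<n}" using g(1) by (rule inj_on_subset) auto
  have I1: "(f \<circ> g) i \<in> X" if "i \<in> {0..<n}" for i
    using that bl g(3) unfolding bi_lipschitz_def by auto
  have I2: "inj_on (f \<circ> g) {0..<n}"
    using bl g(3) inj unfolding bi_lipschitz_def by (metis comp_inj_on)
  have I3: "d ((f \<circ> g) i) ((f \<circ> g) j) < lam * e (g i) (g j) \<and> e (g i) (g j) < lam * d ((f \<circ> g) i) ((f \<circ> g) j)"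
    if ij: "i \<in> {0..<n}" "j \<in> {0..<n}" "i \<noteq> j" for i j
  proof -
    have "g i \<in> B" "g j \<in> B" "g i \<noteq> g j" using ij g(3) inj by (auto simp: inj_on_def)
    then show ?thesis using bl unfolding bi_lipschitz_def by simp
  qed
  have I: "bi_lipschitz lam {0..<n} (\<lambda>i j. e (g i) (g j)) (f \<circ> g) X d"
    unfolding bi_lipschitz_def using I1 I2 I3 by blast
  then obtain G where G: "bi_lipschitz lam {0..n} (\<lambda>i j. e (g i) (g j)) G X d" "\<forall>i<n. G i = (f \<circ> g) i"
    using A M lam unfolding almost_extension_property_def by blast
  show ?thesis
  proof (intro bexI ballI)
    show "G n \<in> X" using G(1) by (simp add: bi_lipschitz_def)
    fix b assume "b \<in> B"
    then obtain i where i: "i < n" "b = g i" using g(3) by auto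
    have ni: "n \<in> {0..n}" "i \<in> {0..n}" "n \<noteq> i" using i by auto
    have "inj_on G {0..n}" using G(1) unfolding bi_lipschitz_def by blast
    then have "G n \<noteq> G i" using ni inj_on_contraD by metis
    show "G n \<noteq> f b \<and> d (G n) (f b) < lam * e p b \<and> e p b < lam * d (G n) (f b)"
    proof -
      note ni
      then have "d (G n) (G i) < lam * e (g n) (g i) \<and> e (g n) (g i) < lam * d (G n) (G i)"
        using G(1) unfolding bi_lipschitz_def by blast
      then show ?thesis using G(2) i g(2) \<open>G n \<noteq> G i\<close> by simp
    qed
  qed
qed


lemma katetov_U:
  assumes U: "urysohn_space U dU" and fin: "finite M" and MU: "M \<subseteq> U"
    and pos: "\<And>x. x \<in> M \<Longrightarrow> r x > 0"
    and lip: "\<And>x y. x \<in> M \<Longrightarrow> y \<in> M \<Longrightarrow> r x \<le> r y + dU x y"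
    and sm: "\<And>x y. x \<in> M \<Longrightarrow> y \<in> M \<Longrightarrow> dU x y \<le> r x + r y"
  shows "\<exists>q\<in>U. \<forall>w\<in>M. dU q w = r w"
proof -
  have MS: "Metric_space U dU" using U by (simp add: urysohn_space_def)
  then have MM: "Metric_space M dU" using MU by (rule Metric_space.subspace)
  have ms: "Metric_space (insert None (Some ` M)) (extd dU r)"
    by (rule Metric_space_extd[OF MM pos lip sm])
  have iso: "isometric_into (Some ` M) (extd dU r) the U dU"
    using MU by (auto simp: isometric_into_def extd_def)
  obtain q where q: "q \<in> U" "\<forall>b\<in>Some ` M. dU q (the b) = extd dU r None b"
    using ext_U[OF U _ _ ms iso] fin by auto
  have "\<forall>w\<in>M. dU q w = r w" using q pos by (auto simp: extd_def) (metis abs_of_pos)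
  then show ?thesis using q(1) by blast
qed



lemma finite_ratio_bound:
  fixes F :: "'i set" and a b :: "'i \<Rightarrow> real"
  assumes "finite F" "\<And>k. k \<in> F \<Longrightarrow> a k < lam * b k" "\<And>k. k \<in> F \<Longrightarrow> b k > 0" "lam > 1"
  shows "\<exists>l. 1 \<le> l \<and> l < lam \<and> (\<forall>k\<in>F. a k \<le> l * b k)"
proof -
  define l where "l = Max (insert 1 ((\<lambda>k. a k / b k) ` F))"
  have fin: "finite (insert 1 ((\<lambda>k. a k / b k) ` F))" using assms(1) by simp
  have "1 \<le> l" unfolding l_def using fin by (simp add: Max_ge)
  moreover have "l < lam" unfolding l_def using fin assms
    by (subst Max_less_iff) (auto simp: pos_divide_less_eq)
  moreover have "a k \<le> l * b k" if "k \<in> F" for k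
  proof -
    have "a k / b k \<le> l" unfolding l_def using fin that by (intro Max_ge) auto
    then show ?thesis using assms(3)[OF that] by (simp add: pos_divide_le_eq mult.commute)
  qed
  ultimately show ?thesis by blast
qed


lemma dir1:
  assumes MX: "Metric_space X d" and Xne: "X \<noteq> {}" and U: "urysohn_space U dU"
    and iso: "isometric_into X d h U dU"
    and dense: "(Metric_space.mtopology U dU) closure_of (h ` X) = U"
  shows "almost_extension_property X d"
  unfolding almost_extension_property_def
proof (intro allI impI, elim conjE)
  fix n :: nat and e :: "nat \<Rightarrow> nat \<Rightarrow> real" and lam :: real and f
  assume ME: "Metric_space {0..n} e" and lam: "1 < lam" and bl: "bi_lipschitz lam {0..<n} e f X d"
  interpret X: Metric_space X d by (rule MX)
  have MU: "Metric_space U dU" using U by (simp add: urysohn_space_def)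
  interpret U: Metric_space U dU by (rule MU)
  interpret E: Metric_space "{0..n}" e by (rule ME)
  have hX: "\<And>x. x \<in> X \<Longrightarrow> h x \<in> U" and hd: "\<And>x y. x \<in> X \<Longrightarrow> y \<in> X \<Longrightarrow> dU (h x) (h y) = d x y"
    using iso by (auto simp: isometric_into_def)
  have fX: "\<And>i. i < n \<Longrightarrow> f i \<in> X" using bl by (auto simp: bi_lipschitz_def)
  have finj: "inj_on f {0..<n}" using bl by (auto simp: bi_lipschitz_def)
  have fbl: "\<And>i j. i < n \<Longrightarrow> j < n \<Longrightarrow> i \<noteq> j \<Longrightarrow> d (f i) (f j) < lam * e i j \<and> e i j < lam * d (f i) (f j)"
    using bl by (auto simp: bi_lipschitz_def)
  have epos: "\<And>i j. i \<le> n \<Longrightarrow> j \<le> n \<Longrightarrow> i \<noteq> j \<Longrightarrow> e i j > 0"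
    using E.zero E.nonneg by (metis atLeastAtMost_iff less_eq_real_def zero_le)
  have dpos: "\<And>i j. i < n \<Longrightarrow> j < n \<Longrightarrow> i \<noteq> j \<Longrightarrow> d (f i) (f j) > 0"
  proof -
    fix i j assume ij: "i < n" "j < n" "i \<noteq> j"
    then have "f i \<noteq> f j" using finj by (auto simp: inj_on_def)
    then show "d (f i) (f j) > 0" using X.zero X.nonneg fX ij by (metis less_eq_real_def)
  qed
  show "\<exists>g. bi_lipschitz lam {0..n} e g X d \<and> (\<forall>i<n. g i = f i)"
  proof (cases "n = 0")
    case True
    obtain x0 where "x0 \<in> X" using Xne by blast
    then have "bi_lipschitz lam {0..n} e (\<lambda>_. x0) X d" using True by (simp add: bi_lipschitz_def)
    then show ?thesis using True by blast
  next
    case False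
    define P where "P = {(i,j). i < n \<and> j < n \<and> i \<noteq> j}"
    have finP: "finite P" unfolding P_def by (rule finite_subset[of _ "{0..<n} \<times> {0..<n}"]) auto
    have finP2: "finite (Inl ` P \<union> Inr ` P)" using finP by simp
    define a where "a z = (case z of Inl (i,j) \<Rightarrow> d (f i) (f j) | Inr (i,j) \<Rightarrow> e i j)" for z
    define b where "b z = (case z of Inl (i,j) \<Rightarrow> e i j | Inr (i,j) \<Rightarrow> d (f i) (f j))" for z
    obtain l where l: "1 \<le> l" "l < lam" "\<forall>k\<in>Inl ` P \<union> Inr ` P. a k \<le> l * b k"
    proof -
      have "\<exists>l. 1 \<le> l \<and> l < lam \<and> (\<forall>k\<in>Inl ` P \<union> Inr ` P. a k \<le> l * b k)"
      proof (rule finite_ratio_bound[OF finP2 _ _ lam])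
        fix k assume "k \<in> Inl ` P \<union> Inr ` P"
        then show "a k < lam * b k" "b k > 0"
          using fbl epos dpos unfolding a_def b_def P_def by auto
      qed
      then show ?thesis using that by blast
    qed
    have l1: "\<And>i j. i < n \<Longrightarrow> j < n \<Longrightarrow> d (f i) (f j) \<le> l * e i j"
    proof -
      fix i j assume ij: "i < n" "j < n"
      show "d (f i) (f j) \<le> l * e i j"
      proof (cases "i = j")
        case True then show ?thesis using fX ij l(1) by simp
      next
        case False
        then have "Inl (i,j) \<in> Inl ` P \<union> Inr ` P" using ij by (auto simp: P_def)
        then have "a (Inl (i,j)) \<le> l * b (Inl (i,j))" using l(3) by blast
        then show ?thesis unfolding a_def b_def by simp
      qed
    qed
    have l2: "\<And>i j. i < n \<Longrightarrow> j < n \<Longrightarrow> e i j \<le> l * d (f i) (f j)"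
    proof -
      fix i j assume ij: "i < n" "j < n"
      show "e i j \<le> l * d (f i) (f j)"
      proof (cases "i = j")
        case True then show ?thesis using ij l(1) by simp
      next
        case False
        then have "Inr (i,j) \<in> Inl ` P \<union> Inr ` P" using ij by (auto simp: P_def)
        then have "a (Inr (i,j)) \<le> l * b (Inr (i,j))" using l(3) by blast
        then show ?thesis unfolding a_def b_def by simp
      qed
    qed
    define r where "r w = Min ((\<lambda>k. l * e n k + dU (h (f k)) w) ` {0..<n})" for w
    have nne: "{0..<n} \<noteq> {}" using False by auto
    have r_le: "\<And>k w. k < n \<Longrightarrow> r w \<le> l * e n k + dU (h (f k)) w"
      unfolding r_def by (intro Min_le) auto
    have r_ex: "\<And>w. \<exists>k<n. r w = l * e n k + dU (h (f k)) w"
    proof -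
      fix w
      have "r w \<in> (\<lambda>k. l * e n k + dU (h (f k)) w) ` {0..<n}"
        unfolding r_def using nne by (intro Min_in) auto
      then show "\<exists>k<n. r w = l * e n k + dU (h (f k)) w" by auto
    qed
    define M where "M = (\<lambda>i. h (f i)) ` {0..<n}"
    have MU': "M \<subseteq> U" using fX hX by (auto simp: M_def)
    have rlow: "\<And>i. i < n \<Longrightarrow> r (h (f i)) \<ge> e n i / l"
    proof -
      fix i assume i: "i < n"
      obtain k where k: "k < n" "r (h (f i)) = l * e n k + dU (h (f k)) (h (f i))" using r_ex by blast
      have "dU (h (f k)) (h (f i)) = d (f k) (f i)" using hd fX k i by simp
      moreover have "e k i \<le> l * d (f k) (f i)" using l2 k i by simp
      moreover have "e n k \<le> l * (l * e n k)" using l(1) E.nonneg[of n k]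
        by (metis less_eq_real_def mult_le_cancel_right1 mult_le_cancel_left1 order_trans mult.assoc mult_nonneg_nonneg zero_le_one)
      moreover have "e n i \<le> e n k + e k i" using E.triangle i k by simp
      ultimately have "e n i \<le> l * r (h (f i))" using k(2) by (simp add: algebra_simps)
      then show "r (h (f i)) \<ge> e n i / l" using l(1) by (simp add: divide_le_eq mult.commute)
    qed
    have rup: "\<And>i. i < n \<Longrightarrow> r (h (f i)) \<le> l * e n i"
      using r_le fX hX by (metis U.mdist_zero add.right_neutral)
    have rpos: "\<And>x. x \<in> M \<Longrightarrow> r x > 0"
    proof -
      fix x assume "x \<in> M"
      then obtain i where i: "i < n" "x = h (f i)" by (auto simp: M_def)
      have "e n i > 0" using epos i by simp
      then have "e n i / l > 0" using l(1) by simp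
      then show "r x > 0" using rlow i by fastforce
    qed
    have rlip: "\<And>x y. x \<in> M \<Longrightarrow> y \<in> M \<Longrightarrow> r x \<le> r y + dU x y"
    proof -
      fix x y assume xy: "x \<in> M" "y \<in> M"
      obtain k where k: "k < n" "r y = l * e n k + dU (h (f k)) y" using r_ex by blast
      have hk: "h (f k) \<in> U" using fX hX k by auto
      have "x \<in> U" "y \<in> U" using xy MU' by auto
      then have "dU (h (f k)) x \<le> dU (h (f k)) y + dU y x" using U.triangle[of "h (f k)" y x] hk by blast
      then show "r x \<le> r y + dU x y" using r_le[OF k(1), of x] k(2) U.commute[of y x] by linarith
    qed
    have rsm: "\<And>x y. x \<in> M \<Longrightarrow> y \<in> M \<Longrightarrow> dU x y \<le> r x + r y"
    proof -
      fix x y assume xy: "x \<in> M" "y \<in> M"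
      obtain k where k: "k < n" "r x = l * e n k + dU (h (f k)) x" using r_ex by blast
      obtain k' where k': "k' < n" "r y = l * e n k' + dU (h (f k')) y" using r_ex by blast
      have hk: "h (f k) \<in> U" "h (f k') \<in> U" using fX hX k k' by auto
      have xyU: "x \<in> U" "y \<in> U" using xy MU' by auto
      have "dU x y \<le> dU x (h (f k)) + dU (h (f k)) y" using U.triangle[of x "h (f k)" y] xyU hk by blast
      also have "dU (h (f k)) y \<le> dU (h (f k)) (h (f k')) + dU (h (f k')) y" using U.triangle[of "h (f k)" "h (f k')" y] xyU hk by blast
      finally have 1: "dU x y \<le> dU x (h (f k)) + dU (h (f k)) (h (f k')) + dU (h (f k')) y" by simp
      have "dU (h (f k)) (h (f k')) = d (f k) (f k')" using hd fX k k' by simp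
      also have "\<dots> \<le> l * e k k'" using l1 k k' by simp
      also have "\<dots> \<le> l * (e k n + e n k')" using E.triangle[of k n k'] k k' l(1) by simp
      finally have 2: "dU (h (f k)) (h (f k')) \<le> l * e n k + l * e n k'"
        using E.commute[of k n] by (simp add: algebra_simps)
      show "dU x y \<le> r x + r y" using 1 2 k k' U.commute[of x "h (f k)"] by linarith
    qed
    obtain q where q: "q \<in> U" "\<forall>w\<in>M. dU q w = r w"
      using katetov_U[OF U _ MU' rpos rlip rsm] by (auto simp: M_def)
    define \<eta> where "\<eta> = Min ((\<lambda>i. min (r (h (f i)) - e n i / lam) (lam * e n i - r (h (f i)))) ` {0..<n})"
    have eta_le: "\<And>i. i < n \<Longrightarrow> \<eta> \<le> r (h (f i)) - e n i / lam \<and> \<eta> \<le> lam * e n i - r (h (f i))"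
      unfolding \<eta>_def by (metis (no_types, lifting) Min_le atLeastLessThan_iff finite_atLeastLessThan finite_imageI image_eqI min.bounded_iff zero_le)
    have eta_pos: "\<eta> > 0"
    proof -
      have "\<eta> \<in> (\<lambda>i. min (r (h (f i)) - e n i / lam) (lam * e n i - r (h (f i)))) ` {0..<n}"
        unfolding \<eta>_def using nne by (intro Min_in) auto
      then obtain i where i: "i < n" "\<eta> = min (r (h (f i)) - e n i / lam) (lam * e n i - r (h (f i)))" by auto
      have en: "e n i > 0" using epos i by simp
      have c1: "e n i / lam < e n i / l" using en l lam by (simp add: frac_less2)
      have c2: "l * e n i < lam * e n i" using en l by simp
      have c3: "e n i / l \<le> r (h (f i))" "r (h (f i)) \<le> l * e n i" using rlow[OF i(1)] rup[OF i(1)] by auto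
      show ?thesis unfolding i(2) using c1 c2 c3 by linarith
    qed
    have "q \<in> U.mtopology closure_of (h ` X)" using dense q(1) by simp
    then obtain y where y: "y \<in> h ` X" "y \<in> U.mball q \<eta>" using eta_pos unfolding U.metric_closure_of by blast
    then obtain x where x: "x \<in> X" "dU q (h x) < \<eta>" by auto
    have close: "\<And>i. i < n \<Longrightarrow> e n i / lam < d x (f i) \<and> d x (f i) < lam * e n i"
    proof -
      fix i assume i: "i < n"
      have hf: "h (f i) \<in> M" using i by (auto simp: M_def)
      have hU: "h x \<in> U" "h (f i) \<in> U" using hX x fX i by auto
      have a1: "dU q (h (f i)) \<le> dU q (h x) + dU (h x) (h (f i))" using U.triangle[of q "h x" "h (f i)"] q(1) hU by blast
      have a2: "dU (h x) (h (f i)) \<le> dU (h x) q + dU q (h (f i))" using U.triangle[of "h x" q "h (f i)"] q(1) hU by blast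
      have "dU (h x) (h (f i)) = d x (f i)" using hd x fX i by simp
      then show "e n i / lam < d x (f i) \<and> d x (f i) < lam * e n i"
        using a1 a2 x(2) q(2) hf eta_le[OF i] U.commute[of q "h x"] by fastforce
    qed
    define g where "g = f(n := x)"
    have gX: "\<forall>a\<in>{0..n}. g a \<in> X" using fX x by (auto simp: g_def)
    have xf: "\<And>i. i < n \<Longrightarrow> x \<noteq> f i"
    proof
      fix i assume i: "i < n" "x = f i"
      have "e n i > 0" using epos i by simp
      then have "d x (f i) > 0" using close[OF i(1)] lam by (smt (verit) divide_pos_pos)
      then show False using i(2) fX[OF i(1)] by simp
    qed
    have ginj: "inj_on g {0..n}"
    proof (rule inj_onI)
      fix i j assume ij: "i \<in> {0..n}" "j \<in> {0..n}" "g i = g j"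
      show "i = j"
      proof (cases "i = n"; cases "j = n")
        assume "i \<noteq> n" "j \<noteq> n"
        then show ?thesis using ij finj by (auto simp: g_def inj_on_def)
      next
        assume "i = n" "j \<noteq> n"
        then show ?thesis using ij xf by (auto simp: g_def)
      next
        assume "i \<noteq> n" "j = n"
        then show ?thesis using ij xf by (auto simp: g_def) (metis le_neq_implies_less)
      qed simp
    qed
    have gd: "\<And>i j. i \<in> {0..n} \<Longrightarrow> j \<in> {0..n} \<Longrightarrow> i \<noteq> j \<Longrightarrow> d (g i) (g j) < lam * e i j \<and> e i j < lam * d (g i) (g j)"
    proof -
      fix i j assume ij: "i \<in> {0..n}" "j \<in> {0..n}" "i \<noteq> j"
      consider "i < n" "j < n" | "i = n" "j < n" | "i < n" "j = n" using ij by fastforce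
      then show "d (g i) (g j) < lam * e i j \<and> e i j < lam * d (g i) (g j)"
      proof cases
        case 1 then show ?thesis using fbl ij by (simp add: g_def)
      next
        case 2 then show ?thesis using close[of j] lam by (simp add: g_def divide_less_eq mult.commute)
      next
        case 3 then show ?thesis using close[of i] lam X.commute[of x "f i"] E.commute[of i n]
          by (simp add: g_def divide_less_eq mult.commute)
      qed
    qed
    have "bi_lipschitz lam {0..n} e g X d" unfolding bi_lipschitz_def using gX ginj gd by blast
    moreover have "\<forall>i<n. g i = f i" by (simp add: g_def)
    ultimately show ?thesis by blast
  qed
qed



lemma extend_iso:
  assumes MX: "Metric_space X d" and MU: "Metric_space U dU"
    and iso: "isometric_into A d h U dU" and AX: "A \<subseteq> X" and yX: "y \<in> X" and yA: "y \<notin> A"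
    and q: "q \<in> U" "\<forall>a\<in>A. dU q (h a) = d y a"
  shows "isometric_into (insert y A) d (h(y := q)) U dU"
proof -
  interpret X: Metric_space X d by (rule MX)
  interpret U: Metric_space U dU by (rule MU)
  have "dU ((h(y := q)) a) ((h(y := q)) b) = d a b" if ab: "a \<in> insert y A" "b \<in> insert y A" for a b
  proof (cases "a = y"; cases "b = y")
    assume "a = y" "b = y" then show ?thesis using q yX by simp
  next
    assume "a = y" "b \<noteq> y" then show ?thesis using q ab by auto
  next
    assume "a \<noteq> y" "b = y" then show ?thesis using q ab U.commute X.commute by auto
  next
    assume "a \<noteq> y" "b \<noteq> y" then show ?thesis using iso ab by (auto simp: isometric_into_def)
  qed
  moreover have "(h(y := q)) a \<in> U" if "a \<in> insert y A" for a
    using that iso q by (auto simp: isometric_into_def)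
  ultimately show ?thesis unfolding isometric_into_def by blast
qed

lemma iso_inj:
  assumes MX: "Metric_space X d" and iso: "isometric_into A d h U dU" and AX: "A \<subseteq> X"
    and MU: "Metric_space U dU"
  shows "inj_on h A"
proof (rule inj_onI)
  interpret X: Metric_space X d by (rule MX)
  interpret U: Metric_space U dU by (rule MU)
  fix a b assume ab: "a \<in> A" "b \<in> A" "h a = h b"
  have "h a \<in> U" using iso ab by (simp add: isometric_into_def)
  then have "dU (h a) (h b) = 0" using ab(3) by simp
  moreover have "dU (h a) (h b) = d a b" using iso ab(1,2) unfolding isometric_into_def by blast
  ultimately have "d a b = 0" by simp
  then show "a = b" using ab AX X.zero[of a b] by blast
qed

lemma add_point:
  assumes U: "urysohn_space U dU" and MX: "Metric_space X d" and fin: "finite A" and AX: "A \<subseteq> X"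
    and iso: "isometric_into A d h U dU" and xX: "x \<in> X"
  shows "\<exists>h'. isometric_into (insert x A) d h' U dU \<and> (\<forall>a\<in>A. h' a = h a)"
proof (cases "x \<in> A")
  case True then show ?thesis using iso by (auto simp: insert_absorb)
next
  case False
  interpret X: Metric_space X d by (rule MX)
  have MU: "Metric_space U dU" using U by (simp add: urysohn_space_def)
  interpret U: Metric_space U dU by (rule MU)
  have inj: "inj_on h A" by (rule iso_inj[OF MX iso AX MU])
  have hA: "h a \<in> U" "\<And>b. b \<in> A \<Longrightarrow> dU (h a) (h b) = d a b" if "a \<in> A" for a
    using iso that by (auto simp: isometric_into_def)
  define r where "r w = d x (inv_into A h w)" for w
  have rh: "r (h a) = d x a" if "a \<in> A" for a using inj that by (simp add: r_def)
  have MU': "h ` A \<subseteq> U" using hA by auto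
  have "\<exists>q\<in>U. \<forall>w\<in>h ` A. dU q w = r w"
  proof (rule katetov_U[OF U _ MU'])
    show "finite (h ` A)" using fin by simp
  next
    fix w assume "w \<in> h ` A"
    then obtain a where a: "a \<in> A" "w = h a" by auto
    then have "x \<noteq> a" using False by auto
    then show "r w > 0" using a rh xX AX by (metis X.nonneg X.zero less_eq_real_def subsetD)
  next
    fix w w' assume "w \<in> h ` A" "w' \<in> h ` A"
    then obtain a b where a: "a \<in> A" "w = h a" "b \<in> A" "w' = h b" by auto
    have "d x a \<le> d x b + d b a" using X.triangle xX a AX by blast
    then show "r w \<le> r w' + dU w w'" using a rh hA X.commute[of a b] by simp
    have "d a b \<le> d a x + d x b" using X.triangle xX a AX by blast
    then show "dU w w' \<le> r w + r w'" using a rh hA X.commute[of a x] by simp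
  qed
  then obtain q where q: "q \<in> U" "\<forall>a\<in>A. dU q (h a) = d x a" using rh by auto
  show ?thesis
    using extend_iso[OF MX MU iso AX xX False q] False by (intro exI[of _ "h(x:=q)"]) auto
qed


lemma add_dense:
  assumes U: "urysohn_space U dU" and MX: "Metric_space X d" and Xne: "X \<noteq> {}"
    and A: "almost_extension_property X d"
    and fin: "finite A" and AX: "A \<subseteq> X"
    and iso: "isometric_into A d h U dU" and uU: "u \<in> U" and eps: "\<epsilon> > 0"
  shows "\<exists>y\<in>X. \<exists>h'. isometric_into (insert y A) d h' U dU \<and> (\<forall>a\<in>A. h' a = h a) \<and> dU (h' y) u < \<epsilon>"
proof -
  interpret X: Metric_space X d by (rule MX)
  have MU: "Metric_space U dU" using U by (simp add: urysohn_space_def)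
  interpret U: Metric_space U dU by (rule MU)
  have inj: "inj_on h A" by (rule iso_inj[OF MX iso AX MU])
  have hA: "h a \<in> U" "\<And>b. b \<in> A \<Longrightarrow> dU (h a) (h b) = d a b" if "a \<in> A" for a
    using iso that by (auto simp: isometric_into_def)
  show ?thesis
  proof (cases "u \<in> h ` A")
    case True
    then obtain a where a: "a \<in> A" "u = h a" by auto
    then show ?thesis using iso eps AX hA(1)[OF a(1)] by (intro bexI[of _ a] exI[of _ h]) (auto simp: insert_absorb)
  next
    case uA: False
    show ?thesis
    proof (cases "A = {}")
      case True
      obtain y where y: "y \<in> X" using Xne by blast
      have "isometric_into (insert y A) d (\<lambda>_. u) U dU" using True uU y by (simp add: isometric_into_def)
      then show ?thesis using True y uU eps by (intro bexI[of _ y] exI[of _ "\<lambda>_. u"]) auto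
    next
      case Ane: False
      define ra where "ra a = dU u (h a)" for a
      define R where "R = (\<Sum>a\<in>A. ra a)"
      have ra_nn: "\<And>a. ra a \<ge> 0" by (simp add: ra_def)
      have raR: "\<And>a. a \<in> A \<Longrightarrow> ra a \<le> R" unfolding R_def using fin ra_nn by (intro member_le_sum) auto
      have R0: "R \<ge> 0" unfolding R_def using ra_nn by (simp add: sum_nonneg)
      define t where "t = min 1 (\<epsilon> / (2 * R + 2))"
      have t0: "t > 0" using eps R0 by (simp add: t_def)
      have t1: "t \<le> 1" by (simp add: t_def)
      have tR: "2 * t * R < \<epsilon>"
      proof -
        have "t \<le> \<epsilon> / (2 * R + 2)" by (simp add: t_def)
        moreover have "2 * R + 2 > 0" using R0 by simp
        ultimately have "t * (2 * R + 2) \<le> \<epsilon>" by (simp add: pos_le_divide_eq)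
        moreover have "t * (2 * R + 2) = 2 * t * R + 2 * t" by (simp add: algebra_simps)
        ultimately show ?thesis using t0 by linarith
      qed
      define lam where "lam = 1 + t"
      have lam1: "lam > 1" using t0 by (simp add: lam_def)
      have "insert u (h ` A) \<subseteq> U" using uU hA(1) by auto
      then have MB: "Metric_space (insert u (h ` A)) dU" by (rule U.subspace)
      have bl: "bi_lipschitz lam (h ` A) dU (inv_into A h) X d"
        unfolding bi_lipschitz_def
      proof (intro conjI ballI impI)
        fix w assume "w \<in> h ` A"
        then show "inv_into A h w \<in> X" using AX by (meson inv_into_into subsetD)
      next
        show "inj_on (inv_into A h) (h ` A)" by (rule inj_on_inv_into) simp
      next
        fix w w' assume ww: "w \<in> h ` A" "w' \<in> h ` A" "w \<noteq> w'"
        then obtain a b where ab: "a \<in> A" "b \<in> A" "w = h a" "w' = h b" by auto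
        then have "a \<noteq> b" using ww by auto
        then have "d a b > 0" using ab AX X.nonneg X.zero by (metis less_eq_real_def subsetD)
        moreover have "inv_into A h w = a" "inv_into A h w' = b" using ab inj by auto
        moreover have "dU w w' = d a b" using ab hA by simp
        ultimately show "d (inv_into A h w) (inv_into A h w') < lam * dU w w'"
          "dU w w' < lam * d (inv_into A h w) (inv_into A h w')" using lam1 by auto
      qed
      obtain y where y: "y \<in> X" "\<forall>w\<in>h ` A. y \<noteq> inv_into A h w \<and> d y (inv_into A h w) < lam * dU u w \<and> dU u w < lam * d y (inv_into A h w)"
        using aep_gen[OF A _ uA MB lam1 bl] fin by blast
      have yA: "\<And>a. a \<in> A \<Longrightarrow> y \<noteq> a \<and> d y a < lam * ra a \<and> ra a < lam * d y a"
      proof -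
        fix a assume a: "a \<in> A"
        then have "inv_into A h (h a) = a" using inj by simp
        then show "y \<noteq> a \<and> d y a < lam * ra a \<and> ra a < lam * d y a" using y(2) a by (force simp: ra_def)
      qed
      have yA': "y \<notin> A" using yA by blast
      have dev: "\<And>a. a \<in> A \<Longrightarrow> \<bar>d y a - ra a\<bar> < \<epsilon>"
      proof -
        fix a assume a: "a \<in> A"
        have e1: "lam * ra a = ra a + t * ra a" "lam * d y a = d y a + t * d y a" by (simp_all add: lam_def algebra_simps)
        have 1: "d y a < ra a + t * ra a" using yA[OF a] e1 by simp
        have "lam * ra a \<le> 2 * ra a" using t1 ra_nn[of a] by (intro mult_right_mono) (auto simp: lam_def)
        then have "d y a < 2 * ra a" using yA[OF a] by simp
        then have "t * d y a \<le> t * (2 * ra a)" using t0 by (intro mult_left_mono) auto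
        then have 2: "ra a < d y a + t * (2 * ra a)" using yA[OF a] e1 by simp
        have "t * ra a \<le> t * R" "t * (2 * ra a) \<le> 2 * t * R" using raR[OF a] t0 by auto
        moreover have "t * R \<ge> 0" using t0 R0 by simp
        ultimately show "\<bar>d y a - ra a\<bar> < \<epsilon>" unfolding abs_less_iff using 1 2 tR by linarith
      qed
      have cons1: "\<And>a b. a \<in> A \<Longrightarrow> b \<in> A \<Longrightarrow> \<bar>d y b - ra b\<bar> \<le> d y a + ra a"
      proof -
        fix a b assume ab: "a \<in> A" "b \<in> A"
        have yX: "a \<in> X" "b \<in> X" using ab AX by auto
        have hU: "h a \<in> U" "h b \<in> U" using hA(1) ab by auto
        have f1: "d y b \<le> d y a + d a b" using X.triangle[of y a b] y(1) yX by blast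
        have f4: "dU (h a) (h b) \<le> dU (h a) u + dU u (h b)" using U.triangle[of "h a" u "h b"] hU uU by blast
        have f2: "dU u (h b) \<le> dU u (h a) + dU (h a) (h b)" using U.triangle[of u "h a" "h b"] hU uU by blast
        have f3: "d a b \<le> d a y + d y b" using X.triangle[of a y b] y(1) yX by blast
        have e: "dU (h a) (h b) = d a b" "d a y = d y a" "dU (h a) u = dU u (h a)"
          using hA(2) ab X.commute U.commute by auto
        show "\<bar>d y b - ra b\<bar> \<le> d y a + ra a"
          unfolding abs_le_iff ra_def using f1 f2 f3 f4 e by linarith
      qed
      define \<delta> where "\<delta> = Max (insert 0 ((\<lambda>a. \<bar>d y a - ra a\<bar>) ` A))"
      have finD: "finite (insert 0 ((\<lambda>a. \<bar>d y a - ra a\<bar>) ` A))" using fin by simp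
      have d_ge: "\<And>a. a \<in> A \<Longrightarrow> \<bar>d y a - ra a\<bar> \<le> \<delta>" unfolding \<delta>_def using finD by (intro Max_ge) auto
      have d_nn: "\<delta> \<ge> 0" unfolding \<delta>_def using finD by (intro Max_ge) auto
      have d_lt: "\<delta> < \<epsilon>" unfolding \<delta>_def using finD dev eps by (subst Max_less_iff) auto
      have d_le: "\<And>a. a \<in> A \<Longrightarrow> \<delta> \<le> d y a + ra a"
      proof -
        fix a assume a: "a \<in> A"
        have "0 \<le> d y a + ra a" using ra_nn[of a] by simp
        then show "\<delta> \<le> d y a + ra a" unfolding \<delta>_def using finD cons1[OF a] by (subst Max_le_iff) auto
      qed
      obtain q where q: "q \<in> U" "dU q u < \<epsilon>" "\<forall>a\<in>A. dU q (h a) = d y a"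
      proof (cases "\<delta> = 0")
        case True
        then have "\<And>a. a \<in> A \<Longrightarrow> d y a = ra a" using d_ge by fastforce
        then show ?thesis using that[of u] uU eps by (simp add: ra_def U.commute)
      next
        case False
        then have dpos: "\<delta> > 0" using d_nn by simp
        define r where "r w = (if w = u then \<delta> else d y (inv_into A h w))" for w
        have rh: "r (h a) = d y a" if "a \<in> A" for a using inj that uA by (auto simp: r_def)
        have ru: "r u = \<delta>" by (simp add: r_def)
        have MU': "insert u (h ` A) \<subseteq> U" using uU hA by auto
        have "\<exists>q\<in>U. \<forall>w\<in>insert u (h ` A). dU q w = r w"
        proof (rule katetov_U[OF U _ MU'])
          show "finite (insert u (h ` A))" using fin by simp
        next
          fix w assume "w \<in> insert u (h ` A)"
          then consider "w = u" | a where "a \<in> A" "w = h a" by auto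
          then show "r w > 0"
          proof cases
            case 1 then show ?thesis using dpos ru by simp
          next
            case 2
            then have "y \<noteq> a" using yA by blast
            then have "d y a > 0" using 2 y(1) AX X.nonneg X.zero by (metis less_eq_real_def subsetD)
            then show ?thesis using rh 2 by simp
          qed
        next
          fix w w' assume w: "w \<in> insert u (h ` A)" and w': "w' \<in> insert u (h ` A)"
          have rlip: "r w \<le> r w' + dU w w' \<and> dU w w' \<le> r w + r w'"
          proof -
            consider "w = u" "w' = u" | a where "a \<in> A" "w = u" "w' = h a"
              | a where "a \<in> A" "w = h a" "w' = u" | a b where "a \<in> A" "b \<in> A" "w = h a" "w' = h b"
              using w w' by auto
            then show ?thesis
            proof cases
              case 1 then show ?thesis using ru dpos uU by simp
            next
              case (2 a)
              have "\<delta> \<le> d y a + ra a" "\<bar>d y a - ra a\<bar> \<le> \<delta>" "r (h a) = d y a" using d_le d_ge rh 2 by auto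
              then show ?thesis using 2 ru unfolding ra_def abs_le_iff by simp
            next
              case (3 a)
              have "\<delta> \<le> d y a + ra a" "\<bar>d y a - ra a\<bar> \<le> \<delta>" "r (h a) = d y a" using d_le d_ge rh 3 by auto
              then show ?thesis using 3 ru U.commute[of "h a" u] unfolding ra_def abs_le_iff by simp
            next
              case (4 a b)
              have "d y a \<le> d y b + d b a" using X.triangle y(1) 4 AX by blast
              moreover have "d a b \<le> d a y + d y b" using X.triangle y(1) 4 AX by blast
              ultimately show ?thesis using 4 rh hA X.commute[of a b] X.commute[of a y] by simp
            qed
          qed
          then show "r w \<le> r w' + dU w w'" "dU w w' \<le> r w + r w'" by auto
        qed
        then obtain q where "q \<in> U" "\<forall>w\<in>insert u (h ` A). dU q w = r w" by blast
        then show ?thesis using that[of q] ru rh d_lt by auto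
      qed
      have "isometric_into (insert y A) d (h(y := q)) U dU"
        by (rule extend_iso[OF MX MU iso AX y(1) yA' q(1) q(3)])
      then show ?thesis using y(1) yA' q(2) by (intro bexI[of _ y] exI[of _ "h(y := q)"]) auto
    qed
  qed
qed




lemma step:
  assumes U: "urysohn_space U dU" and MX: "Metric_space X d" and Xne: "X \<noteq> {}"
    and A: "almost_extension_property X d"
    and fin: "finite A" and AX: "A \<subseteq> X"
    and iso: "isometric_into A d h U dU" and xX: "x \<in> X" and uU: "u \<in> U" and eps: "\<epsilon> > 0"
  shows "\<exists>A' h'. finite A' \<and> A' \<subseteq> X \<and> insert x A \<subseteq> A' \<and> isometric_into A' d h' U dU
     \<and> (\<forall>a\<in>A. h' a = h a) \<and> (\<exists>y\<in>A'. dU (h' y) u < \<epsilon>)"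
proof -
  obtain h1 where h1: "isometric_into (insert x A) d h1 U dU" "\<forall>a\<in>A. h1 a = h a"
    using add_point[OF U MX fin AX iso xX] by blast
  have fin1: "finite (insert x A)" using fin by simp
  have AX1: "insert x A \<subseteq> X" using AX xX by simp
  obtain y h2 where y: "y \<in> X" "isometric_into (insert y (insert x A)) d h2 U dU"
      "\<forall>a\<in>insert x A. h2 a = h1 a" "dU (h2 y) u < \<epsilon>"
    using add_dense[OF U MX Xne A fin1 AX1 h1(1) uU eps] by blast
  have f1: "finite (insert y (insert x A))" using fin by simp
  have f2: "insert y (insert x A) \<subseteq> X" using y(1) AX1 by simp
  have f3: "insert x A \<subseteq> insert y (insert x A)" by blast
  have f4: "\<forall>a\<in>A. h2 a = h a" using y(3) h1(2) by simp
  have f5: "\<exists>z\<in>insert y (insert x A). dU (h2 z) u < \<epsilon>" using y(4) by blast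
  show ?thesis by (intro exI[of _ "insert y (insert x A)"] exI[of _ h2] conjI f1 f2 f3 y(2) f4 f5)
qed

lemma chain_agree:
  fixes S :: "nat \<Rightarrow> 'a set \<times> ('a \<Rightarrow> 'b)"
  assumes "\<And>m. fst (S m) \<subseteq> fst (S (Suc m))" "\<And>m a. a \<in> fst (S m) \<Longrightarrow> snd (S (Suc m)) a = snd (S m) a"
  shows "m \<le> m' \<Longrightarrow> fst (S m) \<subseteq> fst (S m') \<and> (\<forall>a\<in>fst (S m). snd (S m') a = snd (S m) a)"
proof (induction m' rule: dec_induct)
  case base then show ?case by simp
next
  case (step k)
  have "fst (S m) \<subseteq> fst (S (Suc k))" using step.IH assms(1)[of k] by blast
  moreover have "\<forall>a\<in>fst (S m). snd (S (Suc k)) a = snd (S m) a"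
  proof
    fix a assume a: "a \<in> fst (S m)"
    then have "a \<in> fst (S k)" using step.IH by blast
    then show "snd (S (Suc k)) a = snd (S m) a" using assms(2)[of a k] step.IH a by simp
  qed
  ultimately show ?case by blast
qed

lemma U_nonempty:
  assumes U: "urysohn_space U dU" shows "U \<noteq> {}"
proof -
  have "Metric_space (insert (0::nat) {}) (\<lambda>_ _. 0)" by unfold_locales auto
  moreover have "isometric_into {} (\<lambda>_ _. 0) (\<lambda>_::nat. undefined) U dU" by (simp add: isometric_into_def)
  ultimately obtain q where "q \<in> U" using ext_U[OF U, of "{}" 0] by blast
  then show ?thesis by blast
qed

lemma dir2:
  assumes MX: "Metric_space X d" and cX: "countable X" and Xne: "X \<noteq> {}"
    and U: "urysohn_space U dU" and A: "almost_extension_property X d"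
  shows "\<exists>h. isometric_into X d h U dU \<and> (Metric_space.mtopology U dU) closure_of (h ` X) = U"
proof -
  interpret X: Metric_space X d by (rule MX)
  have MU: "Metric_space U dU" using U by (simp add: urysohn_space_def)
  interpret U: Metric_space U dU by (rule MU)
  have "separable_space U.mtopology" using U by (simp add: urysohn_space_def)
  then obtain D where D: "countable D" "D \<subseteq> U" "U.mtopology closure_of D = U"
    unfolding separable_space_def by auto
  have Dne: "D \<noteq> {}" using D(3) U_nonempty[OF U] by auto
  define xs where "xs = from_nat_into X"
  define us where "us = from_nat_into D"
  have xsX: "xs m \<in> X" for m using Xne by (simp add: xs_def from_nat_into)
  have usU: "us m \<in> U" for m using from_nat_into[OF Dne, of m] D(2) unfolding us_def by blast
  define Q where "Q = (\<lambda>(A::'a set) (h::'a \<Rightarrow> 'b) (A'::'a set) (h'::'a \<Rightarrow> 'b) m.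
      finite A' \<and> A' \<subseteq> X \<and> insert (xs m) A \<subseteq> A' \<and> isometric_into A' d h' U dU
     \<and> (\<forall>a\<in>A. h' a = h a) \<and> (\<exists>y\<in>A'. dU (h' y) (us (fst (prod_decode m))) < 1 / real (Suc (snd (prod_decode m)))))"
  define S where "S = rec_nat ({}, \<lambda>_. undefined) (\<lambda>m p. SOME p'. Q (fst p) (snd p) (fst p') (snd p') m)"
  have S0: "S 0 = ({}, \<lambda>_. undefined)" by (simp add: S_def)
  have SS: "S (Suc m) = (SOME p'. Q (fst (S m)) (snd (S m)) (fst p') (snd p') m)" for m by (simp add: S_def)
  have exQ: "\<exists>A' h'. Q (fst (S m)) (snd (S m)) A' h' m"
    if "finite (fst (S m))" "fst (S m) \<subseteq> X" "isometric_into (fst (S m)) d (snd (S m)) U dU" for m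
  proof -
    have "1 / real (Suc (snd (prod_decode m))) > 0" by simp
    then show ?thesis unfolding Q_def by (rule step[OF U MX Xne A that xsX usU])
  qed
  have inv: "finite (fst (S m)) \<and> fst (S m) \<subseteq> X \<and> isometric_into (fst (S m)) d (snd (S m)) U dU" for m
  proof (induction m)
    case 0 then show ?case by (simp add: S0 isometric_into_def)
  next
    case (Suc m)
    have "\<exists>A' h'. Q (fst (S m)) (snd (S m)) A' h' m" using exQ Suc by blast
    then have "\<exists>p'. Q (fst (S m)) (snd (S m)) (fst p') (snd p') m" by auto
    then have "Q (fst (S m)) (snd (S m)) (fst (S (Suc m))) (snd (S (Suc m))) m"
      unfolding SS by (rule someI_ex)
    then show ?case unfolding Q_def by blast
  qed
  have QS: "Q (fst (S m)) (snd (S m)) (fst (S (Suc m))) (snd (S (Suc m))) m" for m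
  proof -
    have "\<exists>A' h'. Q (fst (S m)) (snd (S m)) A' h' m" using exQ inv by blast
    then have "\<exists>p'. Q (fst (S m)) (snd (S m)) (fst p') (snd p') m" by auto
    then show ?thesis unfolding SS by (rule someI_ex)
  qed
  have Qs: "insert (xs m) (fst (S m)) \<subseteq> fst (S (Suc m))" "\<forall>a\<in>fst (S m). snd (S (Suc m)) a = snd (S m) a"
    "\<exists>y\<in>fst (S (Suc m)). dU (snd (S (Suc m)) y) (us (fst (prod_decode m))) < 1 / real (Suc (snd (prod_decode m)))" for m
    using QS[of m] unfolding Q_def by blast+
  have agree: "m \<le> m' \<Longrightarrow> fst (S m) \<subseteq> fst (S m') \<and> (\<forall>a\<in>fst (S m). snd (S m') a = snd (S m) a)" for m m'
  proof (rule chain_agree)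
    show "fst (S k) \<subseteq> fst (S (Suc k))" for k using Qs(1)[of k] by blast
    show "snd (S (Suc k)) a = snd (S k) a" if "a \<in> fst (S k)" for k a using Qs(2)[of k] that by blast
  qed
  define idx where "idx y = (SOME m. xs m = y)" for y
  have idx: "xs (idx y) = y" if "y \<in> X" for y
    unfolding idx_def xs_def using from_nat_into_surj[OF cX that] by (rule someI_ex)
  have inS: "y \<in> fst (S (Suc (idx y)))" if "y \<in> X" for y
  proof -
    have "insert (xs (idx y)) (fst (S (idx y))) \<subseteq> fst (S (Suc (idx y)))" by (rule Qs(1))
    then show ?thesis using idx[OF that] by (simp add: insert_subset)
  qed
  define H where "H y = snd (S (Suc (idx y))) y" for y
  have HS: "H y = snd (S k) y" if "y \<in> X" "y \<in> fst (S k)" for y k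
  proof -
    define M where "M = max k (Suc (idx y))"
    have le: "k \<le> M" "Suc (idx y) \<le> M" by (simp_all add: M_def)
    have "snd (S M) y = snd (S k) y" using agree[OF le(1)] that(2) by blast
    moreover have "snd (S M) y = snd (S (Suc (idx y))) y" using agree[OF le(2)] inS[OF that(1)] by blast
    ultimately show ?thesis by (simp add: H_def)
  qed
  have Hiso: "isometric_into X d H U dU"
    unfolding isometric_into_def
  proof (intro conjI ballI)
    fix y assume y: "y \<in> X"
    have "isometric_into (fst (S (Suc (idx y)))) d (snd (S (Suc (idx y)))) U dU" using inv by blast
    then show "H y \<in> U" using inS[OF y] unfolding H_def isometric_into_def by blast
  next
    fix y z assume y: "y \<in> X" and z: "z \<in> X"
    define M where "M = max (Suc (idx y)) (Suc (idx z))"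
    have le: "Suc (idx y) \<le> M" "Suc (idx z) \<le> M" by (simp_all add: M_def)
    have yM: "y \<in> fst (S M)" using agree[OF le(1)] inS[OF y] by blast
    have zM: "z \<in> fst (S M)" using agree[OF le(2)] inS[OF z] by blast
    have "isometric_into (fst (S M)) d (snd (S M)) U dU" using inv by blast
    then have "dU (snd (S M) y) (snd (S M) z) = d y z" using yM zM unfolding isometric_into_def by blast
    then show "dU (H y) (H z) = d y z" using HS[OF y yM] HS[OF z zM] by simp
  qed
  have HU: "H ` X \<subseteq> U" using Hiso unfolding isometric_into_def by auto
  have dense: "U.mtopology closure_of (H ` X) = U"
  proof
    show "U.mtopology closure_of (H ` X) \<subseteq> U"
      unfolding U.metric_closure_of by blast
  next
    show "U \<subseteq> U.mtopology closure_of (H ` X)"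
    proof
      fix u assume uU: "u \<in> U"
      have "\<forall>r>0. \<exists>y\<in>H ` X. y \<in> U.mball u r"
      proof (intro allI impI)
        fix r :: real assume r: "r > 0"
        have "u \<in> U.mtopology closure_of D" using D(3) uU by simp
        then have cl: "\<forall>s>0. \<exists>y\<in>D. y \<in> U.mball u s" unfolding U.metric_closure_of by blast
        have "r / 2 > 0" using r by simp
        then obtain v where v: "v \<in> D" "v \<in> U.mball u (r/2)" using cl by blast
        obtain k where k: "us k = v" using from_nat_into_surj[OF D(1) v(1)] unfolding us_def by blast
        obtain j :: nat where j: "j > 0" "inverse (real j) < r/2" using ex_inverse_of_nat_less[of "r/2"] r by auto
        define m where "m = prod_encode (k, j)"
        have pd: "prod_decode m = (k, j)" by (simp add: m_def)
        obtain y where y: "y \<in> fst (S (Suc m))" "dU (snd (S (Suc m)) y) (us k) < 1 / real (Suc j)"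
          using Qs(3)[of m] unfolding pd by auto
        have yX: "y \<in> X" using y(1) inv by blast
        have Hy: "H y = snd (S (Suc m)) y" using HS[OF yX y(1)] .
        have "1 / real (Suc j) \<le> 1 / real j" using j(1) by (intro divide_left_mono) auto
        then have "1 / real (Suc j) < r / 2" using j(2) by (simp add: inverse_eq_divide)
        then have 1: "dU (H y) v < r / 2" using Hy y(2) k by simp
        have HyU: "H y \<in> U" using HU yX by auto
        have "dU u (H y) \<le> dU u v + dU v (H y)" using U.triangle[of u v "H y"] uU HyU v by auto
        moreover have "dU u v < r / 2" using v by simp
        ultimately have "dU u (H y) < r" using 1 U.commute[of v "H y"] by simp
        then show "\<exists>y\<in>H ` X. y \<in> U.mball u r" using uU HyU yX by auto
      qed
      then show "u \<in> U.mtopology closure_of (H ` X)" unfolding U.metric_closure_of using uU by blast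
    qed
  qed
  show ?thesis using Hiso dense by blast
qed


theorem fact3p7:
  fixes X :: "'a set" and d :: "'a \<Rightarrow> 'a \<Rightarrow> real"
    and U :: "'u set" and dU :: "'u \<Rightarrow> 'u \<Rightarrow> real"
  assumes "Metric_space X d" and "countable X" and "infinite X"
    and "urysohn_space U dU"
  shows "(\<exists>h. isometric_into X d h U dU \<and>
              (Metric_space.mtopology U dU) closure_of (h ` X) = U)
         \<longleftrightarrow> almost_extension_property X d"
proof
  have Xne: "X \<noteq> {}" using assms(3) by auto
  assume "\<exists>h. isometric_into X d h U dU \<and> (Metric_space.mtopology U dU) closure_of (h ` X) = U"
  then obtain h where "isometric_into X d h U dU" "(Metric_space.mtopology U dU) closure_of (h ` X) = U" by blast
  then show "almost_extension_property X d" using dir1[OF assms(1) Xne assms(4)] by blast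
next
  have Xne: "X \<noteq> {}" using assms(3) by auto
  assume "almost_extension_property X d"
  then show "\<exists>h. isometric_into X d h U dU \<and> (Metric_space.mtopology U dU) closure_of (h ` X) = U"
    using dir2[OF assms(1) assms(2) Xne assms(4)] by blast
qed

end
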